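(* Let $s\in\mathbb{R}^2$ with $|s|=1$, $m=s^\perp$, and let $F,G\in\mathcal{M}_s$ with $F=R(\mathbb{I}+\gamma s\otimes m)$, $G=Q(\mathbb{I}+\zeta s\otimes m)$, where $R,Q\in SO(2)$ and $\gamma,\zeta\in\mathbb{R}$. Then $\operatorname{rank}(F-G)=1$ if and only if one of the following holds: (i) $R=Q$ and $\gamma\neq\zeta$; or (ii) $R\neq Q$ and $\gamma-\zeta=2\tan(\theta/2)$, where $\theta\in(-\pi,\pi)$ is the rotation angle of $Q^TR$, i.e. $Q^TRe_1=\cos\theta\, e_1+\sin\theta\, e_2$. Moreover, in case (i), $F-G=(\gamma-\zeta)Rs\otimes m$, and in case (ii), $$F-G=\frac{\gamma-\zeta}{4+(\gamma-\zeta)^2}\,Q\big((\zeta-\gamma)s+2m\big)\otimes\big(2s+(\gamma+\zeta)m\big).$$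
   Context: $m=s^\perp=(-s_2,s_1)$; $\mathcal{M}_s=\{F\in\mathbb{R}^{2\times2}:\det F=1,|Fs|=1\}=\{R(\mathbb{I}+\gamma s\otimes m):R\in SO(2),\gamma\in\mathbb{R}\}$; $a\otimes b=ab^T$. *)

theory Defs
  imports "HOL-Analysis.Analysis"
begin

definition outer :: "real^'n \<Rightarrow> real^'m \<Rightarrow> real^'m^'n" where
  "outer a b = (\<chi> i j. a $ i * b $ j)"

definition perp :: "real^2 \<Rightarrow> real^2" where
  "perp s = vector [- s $ 2, s $ 1]"

definition e1 :: "real^2" where "e1 = vector [1, 0]"
definition e2 :: "real^2" where "e2 = vector [0, 1]"

end

theory Submission
  imports Defs
begin

lemma rot2:
  fixes R :: "real^2^2" assumes "rotation_matrix R"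
  shows "R$1$2 = - R$2$1" "R$2$2 = R$1$1" "(R$1$1)^2 + (R$2$1)^2 = 1"
proof -
  have o: "transpose R ** R = mat 1" and d: "det R = 1"
    using assms by (auto simp: rotation_matrix_def orthogonal_matrix_def)
  have e1: "(transpose R ** R)$1$1 = 1" "(transpose R ** R)$2$2 = 1" "(transpose R ** R)$1$2 = 0"
    using o by (simp_all add: mat_def)
  hence h: "(R$1$1)^2 + (R$2$1)^2 = 1" "(R$1$2)^2 + (R$2$2)^2 = 1" "R$1$1*R$1$2 + R$2$1*R$2$2 = 0"
    by (simp_all add: matrix_matrix_mult_def sum_2 transpose_def power2_eq_square)
  have dd: "R$1$1 * R$2$2 - R$1$2 * R$2$1 = 1" using d by (simp add: det_2)
  have "(R$1$2 + R$2$1)^2 + (R$2$2 - R$1$1)^2 = 0"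
    using h dd by algebra
  hence "R$1$2 + R$2$1 = 0 \<and> R$2$2 - R$1$1 = 0" by simp
  thus "R$1$2 = - R$2$1" "R$2$2 = R$1$1" by auto
  show "(R$1$1)^2 + (R$2$1)^2 = 1" by (rule h(1))
qed

lemma mat2_eq: "(A::real^2^2) = B \<longleftrightarrow>
   A$1$1 = B$1$1 \<and> A$1$2 = B$1$2 \<and> A$2$1 = B$2$1 \<and> A$2$2 = B$2$2"
  by (auto simp add: vec_eq_iff forall_2)

lemma rank2: "rank (A::real^2^2) = 1 \<longleftrightarrow> A \<noteq> 0 \<and> det A = 0"
proof -
  have "rank A \<le> 2" using rank_bound[of A] by simp
  moreover have "det A = 0 \<longleftrightarrow> rank A < 2" using det_eq_0_rank[of A] by simp
  moreover have "rank A = 0 \<longleftrightarrow> A = 0" by (rule rank_eq_0)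
  ultimately show ?thesis by auto
qed

lemma F1:
  fixes a b p q y1 y2 g z :: real
  assumes "a^2+b^2=1" "p^2+q^2=1" "y1^2+y2^2=1"
  shows "((a - p) + (g*(a*y1 - b*y2) - z*(p*y1 - q*y2))*(-y2)) * ((a - p) + (g*(b*y1 + a*y2) - z*(q*y1 + p*y2))*y1)
       - ((-b + q) + (g*(a*y1 - b*y2) - z*(p*y1 - q*y2))*y1) * ((b - q) + (g*(b*y1 + a*y2) - z*(q*y1 + p*y2))*(-y2))
       = 2*(1 - (p*a+q*b)) - (p*b-q*a)*(g-z)"
  using assms by algebra

lemma F2:
  fixes a b p q y1 y2 g z :: real
  assumes "a^2+b^2=1" "p^2+q^2=1" "y1^2+y2^2=1"
  shows "(((a - p) + (g*(a*y1 - b*y2) - z*(p*y1 - q*y2))*(-y2))*y1 + ((-b + q) + (g*(a*y1 - b*y2) - z*(p*y1 - q*y2))*y1)*y2)^2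
       + (((b - q) + (g*(b*y1 + a*y2) - z*(q*y1 + p*y2))*(-y2))*y1 + ((a - p) + (g*(b*y1 + a*y2) - z*(q*y1 + p*y2))*y1)*y2)^2
       = 2 - 2*(p*a+q*b)"
  using assms by algebra

lemma F3:
  fixes a b y1 y2 g z :: real
  assumes "a^2+b^2=1" "y1^2+y2^2=1"
  shows "((g*(a*y1 - b*y2) - z*(a*y1 - b*y2))*(-y2))^2 + ((g*(a*y1 - b*y2) - z*(a*y1 - b*y2))*y1)^2
     + ((g*(b*y1 + a*y2) - z*(b*y1 + a*y2))*(-y2))^2 + ((g*(b*y1 + a*y2) - z*(b*y1 + a*y2))*y1)^2 = (g-z)^2"
  using assms by algebra

lemma F4:
  fixes a b p q y1 y2 g z d C S :: real
  assumes "a^2+b^2=1" "p^2+q^2=1" "y1^2+y2^2=1" "C^2+S^2=1" "d*C = 2*S" "g = z + d"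
     "p*a+q*b = C^2-S^2" "p*b-q*a = 2*S*C"
  shows "((a - p) + (g*(a*y1 - b*y2) - z*(p*y1 - q*y2))*(-y2)) * (4 + d^2)
      = d * (p*(-d*y1 + 2*(-y2)) - q*(-d*y2 + 2*y1)) * (2*y1 + (g+z)*(-y2))"
    "((-b + q) + (g*(a*y1 - b*y2) - z*(p*y1 - q*y2))*y1) * (4 + d^2)
      = d * (p*(-d*y1 + 2*(-y2)) - q*(-d*y2 + 2*y1)) * (2*y2 + (g+z)*y1)"
    "((b - q) + (g*(b*y1 + a*y2) - z*(q*y1 + p*y2))*(-y2)) * (4 + d^2)
      = d * (q*(-d*y1 + 2*(-y2)) + p*(-d*y2 + 2*y1)) * (2*y1 + (g+z)*(-y2))"
    "((a - p) + (g*(b*y1 + a*y2) - z*(q*y1 + p*y2))*y1) * (4 + d^2)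
      = d * (q*(-d*y1 + 2*(-y2)) + p*(-d*y2 + 2*y1)) * (2*y2 + (g+z)*y1)"
  using assms by algebra+

theorem lemma3p1:
  fixes s :: "real^2" and R Q :: "real^2^2" and \<gamma> \<zeta> :: real
  assumes "norm s = 1"
    and "rotation_matrix R" and "rotation_matrix Q"
  defines "m \<equiv> perp s"
  defines "F \<equiv> R ** (mat 1 + \<gamma> *\<^sub>R outer s m)"
  defines "G \<equiv> Q ** (mat 1 + \<zeta> *\<^sub>R outer s m)"
  shows "(rank (F - G) = 1 \<longleftrightarrow>
            ((R = Q \<and> \<gamma> \<noteq> \<zeta>) \<or>
             (R \<noteq> Q \<and> (\<exists>\<theta>. - pi < \<theta> \<and> \<theta> < pi \<and>
                 (transpose Q ** R) *v e1 = cos \<theta> *\<^sub>R e1 + sin \<theta> *\<^sub>R e2 \<and>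
                 \<gamma> - \<zeta> = 2 * tan (\<theta> / 2)))))
       \<and> ((R = Q \<and> \<gamma> \<noteq> \<zeta>) \<longrightarrow> F - G = (\<gamma> - \<zeta>) *\<^sub>R outer (R *v s) m)
       \<and> (\<forall>\<theta>. (R \<noteq> Q \<and> - pi < \<theta> \<and> \<theta> < pi \<and>
                 (transpose Q ** R) *v e1 = cos \<theta> *\<^sub>R e1 + sin \<theta> *\<^sub>R e2 \<and>
                 \<gamma> - \<zeta> = 2 * tan (\<theta> / 2)) \<longrightarrow>
            F - G = ((\<gamma> - \<zeta>) / (4 + (\<gamma> - \<zeta>)^2)) *\<^sub>R
                    outer (Q *v ((\<zeta> - \<gamma>) *\<^sub>R s + 2 *\<^sub>R m)) (2 *\<^sub>R s + (\<gamma> + \<zeta>) *\<^sub>R m))"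
proof -
  define a where "a = R$1$1"
  define b where "b = R$2$1"
  define p where "p = Q$1$1"
  define q where "q = Q$2$1"
  define y1 where "y1 = s$1"
  define y2 where "y2 = s$2"
  define c where "c = p*a+q*b"
  define sn where "sn = p*b-q*a"
  define d where "d = \<gamma> - \<zeta>"
  have hR: "R$1$1 = a" "R$2$1 = b" "R$1$2 = -b" "R$2$2 = a" and ab: "a^2+b^2=1"
    using rot2[OF assms(2)] by (auto simp: a_def b_def)
  have hQ: "Q$1$1 = p" "Q$2$1 = q" "Q$1$2 = -q" "Q$2$2 = p" and pq: "p^2+q^2=1"
    using rot2[OF assms(3)] by (auto simp: p_def q_def)
  have "inner s s = y1^2 + y2^2"
    by (simp add: inner_vec_def sum_2 power2_eq_square y1_def y2_def)
  hence hs': "(norm s)^2 = y1^2 + y2^2" by (simp add: power2_norm_eq_inner)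
  hence hs: "y1^2+y2^2 = 1" using assms(1) by simp
  have hm: "m$1 = -y2" "m$2 = y1" by (simp_all add: m_def perp_def y1_def y2_def)
  have D: "(F-G)$1$1 = (a - p) + (\<gamma>*(a*y1 - b*y2) - \<zeta>*(p*y1 - q*y2))*(-y2)"
    "(F-G)$1$2 = (-b + q) + (\<gamma>*(a*y1 - b*y2) - \<zeta>*(p*y1 - q*y2))*y1"
    "(F-G)$2$1 = (b - q) + (\<gamma>*(b*y1 + a*y2) - \<zeta>*(q*y1 + p*y2))*(-y2)"
    "(F-G)$2$2 = (a - p) + (\<gamma>*(b*y1 + a*y2) - \<zeta>*(q*y1 + p*y2))*y1"
    by (simp_all add: F_def G_def matrix_matrix_mult_def sum_2 mat_def outer_def hm hR hQ
        y1_def[symmetric] y2_def[symmetric] algebra_simps)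
  have csn: "c^2 + sn^2 = 1" unfolding c_def sn_def using ab pq by algebra
  have det: "det (F-G) = 2*(1-c) - sn*d"
    unfolding det_2 D c_def sn_def d_def by (rule F1[OF ab pq hs])
  have RQ: "R = Q \<longleftrightarrow> a = p \<and> b = q"
    unfolding mat2_eq using hR hQ by auto
  have c1: "c = 1 \<Longrightarrow> R = Q"
  proof -
    assume "c = 1"
    hence "(a-p)^2 + (b-q)^2 = 0" unfolding c_def using ab pq by algebra
    thus "R = Q" unfolding RQ by simp
  qed
  have nz: "F - G = 0 \<Longrightarrow> c = 1"
  proof -
    assume "F - G = 0"
    hence "(F-G)$1$1 = 0" "(F-G)$1$2 = 0" "(F-G)$2$1 = 0" "(F-G)$2$2 = 0" by simp_all
    hence "2 - 2*c = 0" using F2[OF ab pq hs, of \<gamma> \<zeta>] unfolding D c_def by simp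
    thus "c = 1" by simp
  qed
  have RQ0: "R = Q \<Longrightarrow> F - G = 0 \<longleftrightarrow> \<gamma> = \<zeta>"
  proof -
    assume "R = Q"
    hence e: "p = a" "q = b" using RQ by auto
    show ?thesis
    proof
      assume "F - G = 0"
      hence "(F-G)$1$1 = 0" "(F-G)$1$2 = 0" "(F-G)$2$1 = 0" "(F-G)$2$2 = 0" by simp_all
      moreover have "(\<gamma>-\<zeta>)^2 = ((F-G)$1$1)^2 + ((F-G)$1$2)^2 + ((F-G)$2$1)^2 + ((F-G)$2$2)^2"
        using F3[OF ab hs, of \<gamma> \<zeta>] unfolding D e by simp
      ultimately have "(\<gamma>-\<zeta>)^2 = 0" by simp
      thus "\<gamma> = \<zeta>" by simp
    next
      assume "\<gamma> = \<zeta>"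
      thus "F - G = 0" unfolding mat2_eq using D e by simp
    qed
  qed
  have Pe: "(transpose Q ** R) *v e1 = cos \<theta> *\<^sub>R e1 + sin \<theta> *\<^sub>R e2 \<longleftrightarrow> c = cos \<theta> \<and> sn = sin \<theta>" for \<theta>
    by (auto simp: vec_eq_iff forall_2 matrix_vector_mult_def matrix_matrix_mult_def transpose_def
        sum_2 e1_def e2_def hR hQ c_def sn_def algebra_simps)
  have thpart: "c = C^2 - S^2 \<and> sn = 2*S*C \<and> d*C = 2*S \<and> C^2+S^2 = 1"
    if th: "- pi < \<theta>" "\<theta> < pi" "c = cos \<theta>" "sn = sin \<theta>" "d = 2 * tan (\<theta>/2)"
      and CS: "C = cos (\<theta>/2)" "S = sin (\<theta>/2)" for \<theta> C S
  proof -
    have Cp: "C > 0" unfolding CS by (rule cos_gt_zero_pi) (use th in auto)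
    have t2: "\<theta> = 2*(\<theta>/2)" by simp
    have "c = C^2 - S^2" using th(3) cos_double[of "\<theta>/2"] t2 CS by simp
    moreover have "sn = 2*S*C" using th(4) sin_double[of "\<theta>/2"] t2 CS by simp
    moreover have "d*C = 2*S" using th(5) Cp unfolding CS tan_def by (simp add: field_simps)
    moreover have "C^2+S^2 = 1" unfolding CS by (simp add: add.commute)
    ultimately show ?thesis by blast
  qed
  have part2: "(R = Q \<and> \<gamma> \<noteq> \<zeta>) \<longrightarrow> F - G = (\<gamma> - \<zeta>) *\<^sub>R outer (R *v s) m"
  proof
    assume "R = Q \<and> \<gamma> \<noteq> \<zeta>"
    hence e: "p = a" "q = b" using RQ by auto
    show "F - G = (\<gamma> - \<zeta>) *\<^sub>R outer (R *v s) m"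
      unfolding mat2_eq D e
      by (simp add: outer_def matrix_vector_mult_def sum_2 hR hm y1_def[symmetric] y2_def[symmetric]
          algebra_simps)
  qed
  have part3: "\<forall>\<theta>. (R \<noteq> Q \<and> - pi < \<theta> \<and> \<theta> < pi \<and>
                 (transpose Q ** R) *v e1 = cos \<theta> *\<^sub>R e1 + sin \<theta> *\<^sub>R e2 \<and>
                 \<gamma> - \<zeta> = 2 * tan (\<theta> / 2)) \<longrightarrow>
            F - G = ((\<gamma> - \<zeta>) / (4 + (\<gamma> - \<zeta>)^2)) *\<^sub>R
                    outer (Q *v ((\<zeta> - \<gamma>) *\<^sub>R s + 2 *\<^sub>R m)) (2 *\<^sub>R s + (\<gamma> + \<zeta>) *\<^sub>R m)"
  proof (intro allI impI)
    fix \<theta>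
    assume h: "R \<noteq> Q \<and> - pi < \<theta> \<and> \<theta> < pi \<and>
                 (transpose Q ** R) *v e1 = cos \<theta> *\<^sub>R e1 + sin \<theta> *\<^sub>R e2 \<and>
                 \<gamma> - \<zeta> = 2 * tan (\<theta> / 2)"
    have T: "c = (cos (\<theta>/2))^2 - (sin (\<theta>/2))^2 \<and> sn = 2 * sin (\<theta>/2)*cos (\<theta>/2) \<and>
       d*cos (\<theta>/2) = 2 * sin (\<theta>/2) \<and> (cos (\<theta>/2))^2+(sin (\<theta>/2))^2 = 1"
      using thpart[of \<theta> "cos (\<theta>/2)" "sin (\<theta>/2)"] h Pe[of \<theta>] unfolding d_def by auto
    have g: "\<gamma> = \<zeta> + d" unfolding d_def by simp
    note E = F4[OF ab pq hs _ _ g, of "cos (\<theta>/2)" "sin (\<theta>/2)"]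
    have pos: "4 + d^2 \<noteq> 0" using zero_le_power2[of d] by linarith
    have E': "(F-G)$1$1 * (4 + d^2) = d * (p*(-d*y1 + 2*(-y2)) - q*(-d*y2 + 2*y1)) * (2*y1 + (\<gamma>+\<zeta>)*(-y2))"
      "(F-G)$1$2 * (4 + d^2) = d * (p*(-d*y1 + 2*(-y2)) - q*(-d*y2 + 2*y1)) * (2*y2 + (\<gamma>+\<zeta>)*y1)"
      "(F-G)$2$1 * (4 + d^2) = d * (q*(-d*y1 + 2*(-y2)) + p*(-d*y2 + 2*y1)) * (2*y1 + (\<gamma>+\<zeta>)*(-y2))"
      "(F-G)$2$2 * (4 + d^2) = d * (q*(-d*y1 + 2*(-y2)) + p*(-d*y2 + 2*y1)) * (2*y2 + (\<gamma>+\<zeta>)*y1)"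
      unfolding D using E T c_def sn_def by auto
    define V where "V = Q *v ((\<zeta> - \<gamma>) *\<^sub>R s + 2 *\<^sub>R m)"
    define W where "W = 2 *\<^sub>R s + (\<gamma> + \<zeta>) *\<^sub>R m"
    have zg: "\<zeta> - \<gamma> = - d" unfolding d_def by simp
    have V1: "V$1 = p*(-d*y1 + 2*(-y2)) - q*(-d*y2 + 2*y1)"
      unfolding V_def zg by (simp add: matrix_vector_mult_def sum_2 hQ hm y1_def[symmetric] y2_def[symmetric] algebra_simps)
    have V2: "V$2 = q*(-d*y1 + 2*(-y2)) + p*(-d*y2 + 2*y1)"
      unfolding V_def zg by (simp add: matrix_vector_mult_def sum_2 hQ hm y1_def[symmetric] y2_def[symmetric] algebra_simps)
    have W1: "W$1 = 2*y1 + (\<gamma>+\<zeta>)*(-y2)"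
      unfolding W_def by (simp add: hm y1_def[symmetric])
    have W2: "W$2 = 2*y2 + (\<gamma>+\<zeta>)*y1"
      unfolding W_def by (simp add: hm y2_def[symmetric])
    have ent: "((d / (4 + d^2)) *\<^sub>R outer V W)$i$j = d / (4 + d^2) * (V$i * W$j)" for i j
      by (simp add: outer_def)
    have divh: "x = d / k * (A * B)" if "x * k = d * A * B" "k \<noteq> 0" for x k A B :: real
      using that by (simp add: field_simps)
    show "F - G = ((\<gamma> - \<zeta>) / (4 + (\<gamma> - \<zeta>)^2)) *\<^sub>R
                    outer (Q *v ((\<zeta> - \<gamma>) *\<^sub>R s + 2 *\<^sub>R m)) (2 *\<^sub>R s + (\<gamma> + \<zeta>) *\<^sub>R m)"
      unfolding d_def[symmetric] V_def[symmetric] W_def[symmetric] mat2_eq ent V1 V2 W1 W2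
      using divh[OF E'(1) pos] divh[OF E'(2) pos] divh[OF E'(3) pos] divh[OF E'(4) pos]
      by blast
  qed
  have part1: "rank (F - G) = 1 \<longleftrightarrow>
            ((R = Q \<and> \<gamma> \<noteq> \<zeta>) \<or>
             (R \<noteq> Q \<and> (\<exists>\<theta>. - pi < \<theta> \<and> \<theta> < pi \<and>
                 (transpose Q ** R) *v e1 = cos \<theta> *\<^sub>R e1 + sin \<theta> *\<^sub>R e2 \<and>
                 \<gamma> - \<zeta> = 2 * tan (\<theta> / 2))))"
  proof -
  have fwd: "(R = Q \<and> \<gamma> \<noteq> \<zeta>) \<or> (R \<noteq> Q \<and> (\<exists>\<theta>. - pi < \<theta> \<and> \<theta> < pi \<and> c = cos \<theta> \<and> sn = sin \<theta> \<and> d = 2 * tan (\<theta> / 2)))"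
    if h: "F - G \<noteq> 0 \<and> det (F - G) = 0"
  proof -
    have dz: "2*(1-c) = sn*d" using h det by simp
    show "(R = Q \<and> \<gamma> \<noteq> \<zeta>) \<or> (R \<noteq> Q \<and> (\<exists>\<theta>. - pi < \<theta> \<and> \<theta> < pi \<and> c = cos \<theta> \<and> sn = sin \<theta> \<and> d = 2 * tan (\<theta> / 2)))"
    proof (cases "R = Q")
      case True
      then show ?thesis using RQ0 h by auto
    next
      case False
      have cm: "c \<noteq> -1"
      proof
        assume "c = -1"
        hence "sn = 0" using csn by simp
        thus False using dz \<open>c = -1\<close> by simp
      qed
      have s2e: "sn^2 = (1-c)*(1+c)" using csn by algebra
      have "c^2 \<le> 1" using csn zero_le_power2[of sn] by linarith
      hence "\<bar>c\<bar> \<le> 1" by (simp add: abs_square_le_1)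
      hence cp: "1 + c > 0" using cm by linarith
      have snz: "sn \<noteq> 0"
      proof
        assume "sn = 0"
        hence "c^2 = 1" using csn by simp
        hence "c = 1" using cm by (simp add: power2_eq_1_iff)
        thus False using c1 False by simp
      qed
      define u where "u = sn / (1 + c)"
      define \<theta> where "\<theta> = 2 * arctan u"
      have b1: "- pi < \<theta>" "\<theta> < pi" unfolding \<theta>_def using arctan_ubound[of u] arctan_lbound[of u] by auto
      have ht: "\<theta>/2 = arctan u" unfolding \<theta>_def by simp
      have "u^2 = sn^2/(1+c)^2" by (simp add: u_def power_divide)
      also have "\<dots> = (1-c)/(1+c)" using cp unfolding s2e by (simp add: power2_eq_square)
      finally have u2': "u^2 = (1-c)/(1+c)" .
      have u2: "1 + u^2 = 2 / (1 + c)" unfolding u2' using cp by (simp add: field_simps)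
      have "cos \<theta> = cos (arctan u)^2 - sin (arctan u)^2" unfolding \<theta>_def by (rule cos_double)
      also have "\<dots> = (1 - u^2)/(1+u^2)" by (simp add: cos_arctan sin_arctan power_divide diff_divide_distrib)
      also have "\<dots> = c" unfolding u2' using cp by (simp add: field_simps)
      finally have cc: "c = cos \<theta>" by simp
      have "sin \<theta> = 2 * sin (arctan u) * cos (arctan u)" unfolding \<theta>_def by (rule sin_double)
      also have "\<dots> = 2 * u / (1 + u^2)" by (simp add: sin_arctan cos_arctan)
      also have "\<dots> = sn" using u2 cp unfolding u_def by (simp add: field_simps)
      finally have ss: "sn = sin \<theta>" by simp
      have "d * sn * (1 + c) = 2 * sn * sn"
        using dz s2e by algebra
      hence "d * (1 + c) = 2 * sn" using snz by (simp add: mult.commute mult.left_commute)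
      hence dd: "d = 2 * tan (\<theta>/2)" unfolding ht tan_arctan u_def using cp by (simp add: field_simps)
      show ?thesis using False b1 cc ss dd by blast
    qed
  qed
  have bwd: "F - G \<noteq> 0 \<and> det (F - G) = 0"
    if h: "(R = Q \<and> \<gamma> \<noteq> \<zeta>) \<or> (R \<noteq> Q \<and> (\<exists>\<theta>. - pi < \<theta> \<and> \<theta> < pi \<and> c = cos \<theta> \<and> sn = sin \<theta> \<and> d = 2 * tan (\<theta> / 2)))"
    proof (cases "R = Q")
      case True
      hence e: "p = a" "q = b" using RQ by auto
      have "c = 1" "sn = 0" unfolding c_def sn_def e using ab by (simp_all add: power2_eq_square)
      thus ?thesis using RQ0 True h det by auto
    next
      case False
      then obtain \<theta> where th: "- pi < \<theta>" "\<theta> < pi" "c = cos \<theta>" "sn = sin \<theta>" "d = 2 * tan (\<theta> / 2)"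
        using h by blast
      have T: "c = (cos (\<theta>/2))^2 - (sin (\<theta>/2))^2 \<and> sn = 2 * sin (\<theta>/2)*cos (\<theta>/2) \<and>
       d*cos (\<theta>/2) = 2 * sin (\<theta>/2) \<and> (cos (\<theta>/2))^2+(sin (\<theta>/2))^2 = 1"
        using thpart[OF th] by blast
      have "2*(1-c) - sn*d = 0" using T by algebra
      thus ?thesis using det nz c1 False by auto
    qed
  show ?thesis unfolding rank2 Pe d_def[symmetric] using fwd bwd by blast
  qed
  show ?thesis using part1 part2 part3 by blast
qed

end
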